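(* Let $k\in\{1,\dots,N-1\}$. Let $(q^n)$, with $q^n=(\zeta^n_i,z^n_i)_{i\in\mathbf N}$, be a sequence of simple choreographic loops in $\Lambda$ satisfying $[z^n_0]=0$. Suppose $\|q^n\|_{H^1}\to\infty$ while $\mathcal A_k(q^n;2\pi)$ stays bounded. Then: (a) $\|z^n_i\|_{H^1}$ is bounded uniformly in $i$ and $n$; (b) for each $i\in\mathbf N$, $|\zeta^n_i(t)|\to\infty$ uniformly in $t\in\mathbb R$; (c) after passing to a subsequence, for each $i\in\mathbf N$ there is $u_i\in\mathbb C$ with $|u_i|=1$ such that $\zeta_i^n(t)/|\zeta_i^n(t)|\to e^{-\mathrm ikt}u_i$ uniformly on $\mathbb R$.
   Context: Fix $N\ge2$ and $\mathbf N=\{0,\dots,N-1\}$. Positions are $q_i=(\zeta_i,z_i)\in\mathbb C\times\mathbb R$ with $\zeta_i=x_i+\mathrm iy_i$. - Loop space: $\Lambda=H^1(\mathbb R/2\pi\mathbb Z,\mathbb R^{3N})$. - Simple choreographic loops: a loop $q\in\Lambda$ is simple choreographic if $q_i(t)=q_0(t+2\pi i/N)$ for all $i,t$. - Potential: $U(q)=\sum_{i<j}1/|q_i-q_j|$. - Rotating-frame action: $\mathcal A_\omega(q;T)=\int_0^T\big(\tfrac12\sum_i(|\dot\zeta_i+\mathrm i\omega\zeta_i|^2+\dot z_i^2)+U(q)\big)dt$. - Mean: $[z_0]=\frac1{2\pi}\int_0^{2\pi}z_0$. *)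

theory Defs
  imports "HOL-Analysis.Analysis"
begin

text \<open>Weak derivative on the real line: g is locally integrable and
  f b - f a is the integral of g over [a,b]. (So f is locally absolutely
  continuous with derivative g a.e.)\<close>
definition weak_deriv :: "(real \<Rightarrow> real) \<Rightarrow> (real \<Rightarrow> real) \<Rightarrow> bool" where
  "weak_deriv f g \<longleftrightarrow>
     (\<forall>a b. set_integrable lborel {a..b} g) \<and>
     (\<forall>a b. a \<le> b \<longrightarrow> f b - f a = (LINT s:{a..b}|lborel. g s))"

text \<open>Real-valued H^1 functions on the circle R/2piZ (as 2pi-periodic functions on R).\<close>
definition H1_loop :: "(real \<Rightarrow> real) \<Rightarrow> bool" where
  "H1_loop f \<longleftrightarrow> (\<forall>t. f (t + 2*pi) = f t) \<and>
     (\<exists>g. weak_deriv f g \<and> set_integrable lborel {0..2*pi} (\<lambda>t. (g t)\<^sup>2))"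

text \<open>A chosen weak derivative (unique up to null sets).\<close>
definition wd :: "(real \<Rightarrow> real) \<Rightarrow> (real \<Rightarrow> real)" where
  "wd f = (SOME g. weak_deriv f g \<and> set_integrable lborel {0..2*pi} (\<lambda>t. (g t)\<^sup>2))"

definition cwd :: "(real \<Rightarrow> complex) \<Rightarrow> (real \<Rightarrow> complex)" where
  "cwd f = (\<lambda>t. Complex (wd (\<lambda>s. Re (f s)) t) (wd (\<lambda>s. Im (f s)) t))"

definition h1_sq :: "(real \<Rightarrow> real) \<Rightarrow> real" where
  "h1_sq f = (LINT t:{0..2*pi}|lborel. (f t)\<^sup>2 + (wd f t)\<^sup>2)"

definition h1_norm :: "(real \<Rightarrow> real) \<Rightarrow> real" where
  "h1_norm f = sqrt (h1_sq f)"

definition in_Lambda :: "nat \<Rightarrow> (nat \<Rightarrow> real \<Rightarrow> complex) \<Rightarrow> (nat \<Rightarrow> real \<Rightarrow> real) \<Rightarrow> bool" where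
  "in_Lambda N \<zeta> z \<longleftrightarrow> (\<forall>i<N. H1_loop (\<lambda>t. Re (\<zeta> i t)) \<and> H1_loop (\<lambda>t. Im (\<zeta> i t)) \<and> H1_loop (z i))"

definition Lambda_norm :: "nat \<Rightarrow> (nat \<Rightarrow> real \<Rightarrow> complex) \<Rightarrow> (nat \<Rightarrow> real \<Rightarrow> real) \<Rightarrow> real" where
  "Lambda_norm N \<zeta> z = sqrt (\<Sum>i<N. h1_sq (\<lambda>t. Re (\<zeta> i t)) + h1_sq (\<lambda>t. Im (\<zeta> i t)) + h1_sq (z i))"

definition simple_choreographic :: "nat \<Rightarrow> (nat \<Rightarrow> real \<Rightarrow> complex) \<Rightarrow> (nat \<Rightarrow> real \<Rightarrow> real) \<Rightarrow> bool" where
  "simple_choreographic N \<zeta> z \<longleftrightarrow>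
     (\<forall>i<N. \<forall>t. \<zeta> i t = \<zeta> 0 (t + 2*pi*real i / real N) \<and> z i t = z 0 (t + 2*pi*real i / real N))"

definition potU :: "nat \<Rightarrow> (nat \<Rightarrow> complex) \<Rightarrow> (nat \<Rightarrow> real) \<Rightarrow> ennreal" where
  "potU N \<zeta> z = (\<Sum>(i,j)\<in>{(i,j). i < j \<and> j < N}.
      (let d = sqrt ((cmod (\<zeta> i - \<zeta> j))\<^sup>2 + (z i - z j)\<^sup>2)
       in if d = 0 then \<infinity> else ennreal (1 / d)))"

definition action :: "nat \<Rightarrow> real \<Rightarrow> (nat \<Rightarrow> real \<Rightarrow> complex) \<Rightarrow> (nat \<Rightarrow> real \<Rightarrow> real) \<Rightarrow> real \<Rightarrow> ennreal" where
  "action N \<omega> \<zeta> z T = (\<integral>\<^sup>+ t\<in>{0..T}.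
      ennreal ((1/2) * (\<Sum>i<N. (cmod (cwd (\<zeta> i) t + \<i> * of_real \<omega> * \<zeta> i t))\<^sup>2 + (wd (z i) t)\<^sup>2))
      + potU N (\<lambda>i. \<zeta> i t) (\<lambda>i. z i t) \<partial>lborel)"

definition mean :: "(real \<Rightarrow> real) \<Rightarrow> real" where
  "mean f = (1 / (2*pi)) * (LINT t:{0..2*pi}|lborel. f t)"

end

theory Submission
  imports Defs "HOL-Analysis.Analysis"
begin

lemma periodic_int:
  fixes f :: "real \<Rightarrow> 'a"
  assumes per: "\<And>t. f (t + p) = f t"
  shows "f (t + real_of_int m * p) = f t"
proof -
  have nat: "f (t + real n * p) = f t" for n :: nat and t
    by (induction n arbitrary: t) (auto simp: algebra_simps per[of "t + real _ * p", simplified add.assoc] ,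
        metis add.assoc per)
  show ?thesis
  proof (cases "m \<ge> 0")
    case True
    then show ?thesis using nat[of t "nat m"] by simp
  next
    case False
    have "f (t + real_of_int m * p) = f (t + real_of_int m * p + real (nat (-m)) * p)"
      using nat by simp
    also have "\<dots> = f t" using False by simp
    finally show ?thesis .
  qed
qed

lemma periodic_reduce:
  fixes f :: "real \<Rightarrow> 'a"
  assumes per: "\<And>t. f (t + p) = f t" and p: "p > 0"
  shows "\<exists>s\<in>{0..p}. f t = f s"
proof -
  define m where "m = \<lfloor>t / p\<rfloor>"
  define s where "s = t - real_of_int m * p"
  have "real_of_int m \<le> t / p" "t / p < real_of_int m + 1" unfolding m_def by linarith+
  then have "real_of_int m * p \<le> t" "t < (real_of_int m + 1) * p"
    using p by (auto simp: field_simps)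
  then have s: "s \<in> {0..p}" unfolding s_def by (auto simp: algebra_simps)
  have "f s = f (s + real_of_int m * p)" using periodic_int[of f p, OF per] by metis
  also have "s + real_of_int m * p = t" unfolding s_def by simp
  finally show ?thesis using s by metis
qed

lemma wd_spec:
  assumes "H1_loop f"
  shows "weak_deriv f (wd f)" "set_integrable lborel {0..2*pi} (\<lambda>t. (wd f t)\<^sup>2)"
proof -
  have "\<exists>g. weak_deriv f g \<and> set_integrable lborel {0..2*pi} (\<lambda>t. (g t)\<^sup>2)"
    using assms unfolding H1_loop_def by blast
  from someI_ex[OF this] show "weak_deriv f (wd f)" "set_integrable lborel {0..2*pi} (\<lambda>t. (wd f t)\<^sup>2)"
    unfolding wd_def by blast+
qed

lemma cont_from_integral:
  fixes F G :: "real \<Rightarrow> 'a::euclidean_space"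
  assumes int: "\<And>a b. set_integrable lborel {a..b} G"
    and eq: "\<And>a b. a \<le> b \<Longrightarrow> F b - F a = (LINT s:{a..b}|lborel. G s)"
  shows "continuous_on UNIV F"
proof (rule continuous_at_imp_continuous_on, intro ballI)
  fix x :: real
  define a where "a = x - 1"
  define b where "b = x + 1"
  have 1: "continuous_on {a..b} (\<lambda>y. F a + integral {a..y} G)"
    by (intro continuous_intros indefinite_integral_continuous_1 set_borel_integral_eq_integral(1) int)
  have "continuous_on {a..b} F"
  proof (rule continuous_on_eq[OF 1])
    fix y assume "y \<in> {a..b}"
    then have "F y - F a = integral {a..y} G"
      using eq[of a y] set_borel_integral_eq_integral(2)[OF int[of a y]] by auto
    then show "F a + integral {a..y} G = F y" by (simp add: algebra_simps)
  qed
  moreover have "x \<in> interior {a..b}" unfolding a_def b_def by auto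
  ultimately show "isCont F x" by (rule continuous_on_interior)
qed

lemma set_integrable_cor:
  assumes "set_integrable M A f"
  shows "set_integrable M A (\<lambda>x. complex_of_real (f x))"
proof -
  have "(\<lambda>x. indicator A x *\<^sub>R complex_of_real (f x)) = (\<lambda>x. complex_of_real (indicator A x *\<^sub>R f x))"
    by (auto simp: indicator_def)
  then show ?thesis using assms unfolding set_integrable_def by (metis integrable_of_real)
qed

lemma cwd_eq: "cwd \<zeta> s = complex_of_real (wd (\<lambda>s. Re (\<zeta> s)) s) + \<i> * complex_of_real (wd (\<lambda>s. Im (\<zeta> s)) s)"
  unfolding cwd_def by (simp add: Complex_eq)

lemma cwd_props:
  assumes h1: "H1_loop (\<lambda>t. Re (\<zeta> t))" "H1_loop (\<lambda>t. Im (\<zeta> t))"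
  shows "set_integrable lborel {a..b} (cwd \<zeta>)"
    and "a \<le> b \<Longrightarrow> \<zeta> b - \<zeta> a = (LINT s:{a..b}|lborel. cwd \<zeta> s)"
proof -
  let ?g1 = "wd (\<lambda>s. Re (\<zeta> s))" and ?g2 = "wd (\<lambda>s. Im (\<zeta> s))"
  have w1: "weak_deriv (\<lambda>s. Re (\<zeta> s)) ?g1" and w2: "weak_deriv (\<lambda>s. Im (\<zeta> s)) ?g2"
    using wd_spec h1 by blast+
  have i1: "set_integrable lborel {a..b} (\<lambda>s. complex_of_real (?g1 s))"
    using w1 unfolding weak_deriv_def by (blast intro: set_integrable_cor)
  have i2': "set_integrable lborel {a..b} (\<lambda>s. complex_of_real (?g2 s))"
    using w2 unfolding weak_deriv_def by (blast intro: set_integrable_cor)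
  have i2: "set_integrable lborel {a..b} (\<lambda>s. \<i> * complex_of_real (?g2 s))"
    using set_integrable_mult_right[OF i2'] .
  have ceq: "cwd \<zeta> = (\<lambda>s. complex_of_real (?g1 s) + \<i> * complex_of_real (?g2 s))"
    using cwd_eq by blast
  show "set_integrable lborel {a..b} (cwd \<zeta>)"
    unfolding ceq using i1 i2 by (rule set_integral_add)
  assume ab: "a \<le> b"
  have "(LINT s:{a..b}|lborel. cwd \<zeta> s) =
     (LINT s:{a..b}|lborel. complex_of_real (?g1 s)) + (LINT s:{a..b}|lborel. \<i> * complex_of_real (?g2 s))"
    unfolding ceq using i1 i2 by (rule set_integral_add)
  also have "\<dots> = complex_of_real (Re (\<zeta> b) - Re (\<zeta> a)) + \<i> * complex_of_real (Im (\<zeta> b) - Im (\<zeta> a))"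
    using w1 w2 ab unfolding weak_deriv_def
    by (simp add: set_integral_complex_of_real)
  also have "\<dots> = \<zeta> b - \<zeta> a"
    by (simp add: complex_eq_iff)
  finally show "\<zeta> b - \<zeta> a = (LINT s:{a..b}|lborel. cwd \<zeta> s)" by simp
qed

lemma phi_deriv:
  "((\<lambda>s::real. exp (\<i> * complex_of_real (c * s))) has_vector_derivative
     (\<i> * complex_of_real c * exp (\<i> * complex_of_real (c * s)))) (at s within X)"
proof -
  have "((\<lambda>z. exp (\<i> * (complex_of_real c * z))) has_field_derivative
     (\<i> * complex_of_real c * exp (\<i> * (complex_of_real c * complex_of_real s)))) (at (complex_of_real s))"
    by (auto intro!: derivative_eq_intros simp: algebra_simps)
  from has_vector_derivative_real_field[OF this, of X] show ?thesis by simp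
qed

lemma norm_phi[simp]: "norm (exp (\<i> * complex_of_real x)) = 1"
  by (simp add: norm_exp_eq_Re)

lemma by_parts_exp:
  fixes F G :: "real \<Rightarrow> complex" and c a b :: real
  assumes int: "\<And>a b. set_integrable lborel {a..b} G"
    and eq: "\<And>a b. a \<le> b \<Longrightarrow> F b - F a = (LINT s:{a..b}|lborel. G s)"
    and ab: "a \<le> b"
  shows "exp (\<i> * complex_of_real (c * b)) * F b - exp (\<i> * complex_of_real (c * a)) * F a
     = (LINT s:{a..b}|lborel. exp (\<i> * complex_of_real (c * s)) * (G s + \<i> * complex_of_real c * F s))"
proof -
  define \<phi> where "\<phi> = (\<lambda>s::real. exp (\<i> * complex_of_real (c * s)))"
  define \<phi>' where "\<phi>' = (\<lambda>s::real. \<i> * complex_of_real c * \<phi> s)"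
  define \<psi> where "\<psi> = (\<lambda>r. indicator {a..b} r *\<^sub>R G r)"
  define H where "H = (\<lambda>r s. if r \<le> s \<and> s \<le> b then \<phi>' s * \<psi> r else 0)"
  have contF: "continuous_on UNIV F" by (rule cont_from_integral[OF int eq])
  have contphi: "continuous_on UNIV \<phi>" unfolding \<phi>_def by (intro continuous_intros)
  have contphi': "continuous_on UNIV \<phi>'" unfolding \<phi>'_def by (intro continuous_intros contphi)
  have dphi: "(\<phi> has_vector_derivative \<phi>' s) (at s within X)" for s X
    unfolding \<phi>_def \<phi>'_def by (rule phi_deriv)
  have nphi[simp]: "norm (\<phi> s) = 1" for s unfolding \<phi>_def by simp
  have psi_int: "integrable lborel \<psi>" using int[of a b] unfolding set_integrable_def \<psi>_def .
  have psi_meas[measurable]: "\<psi> \<in> borel_measurable lborel" using psi_int by (rule borel_measurable_integrable)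
  have phi'_meas[measurable]: "\<phi>' \<in> borel_measurable lborel"
    using borel_measurable_continuous_onI[OF contphi'] by simp
  have H_meas: "(\<lambda>(r,s). H r s) \<in> borel_measurable (lborel \<Otimes>\<^sub>M lborel)"
    unfolding H_def by measurable
  define D where "D = (\<lambda>(r::real,s::real). \<bar>c\<bar> * norm (\<psi> r) * indicator {a..b} s)"
  have D_int: "integrable (lborel \<Otimes>\<^sub>M lborel) D"
  proof (rule lborel_pair.Fubini_integrable)
    show "D \<in> borel_measurable (lborel \<Otimes>\<^sub>M lborel)" unfolding D_def by measurable
    have "(\<lambda>r. \<integral>s. norm (D (r, s)) \<partial>lborel) = (\<lambda>r. \<bar>c\<bar> * norm (\<psi> r) * (b - a))"
      using ab by (auto simp: D_def abs_mult)
    moreover have "integrable lborel (\<lambda>r. \<bar>c\<bar> * norm (\<psi> r) * (b - a))"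
      using psi_int by auto
    ultimately show "integrable lborel (\<lambda>r. \<integral>s. norm (D (r, s)) \<partial>lborel)" by simp
    have ii: "integrable lborel (indicat_real {a..b})"
      by (rule integrable_real_indicator) (use ab in auto)
    show "AE r in lborel. integrable lborel (\<lambda>s. D (r, s))"
      unfolding D_def using ii by auto
  qed
  have H_int: "integrable (lborel \<Otimes>\<^sub>M lborel) (\<lambda>(r,s). H r s)"
  proof (rule Bochner_Integration.integrable_bound[OF D_int H_meas], rule AE_I2)
    fix x :: "real \<times> real"
    obtain r s where x: "x = (r,s)" by fastforce
    show "norm ((\<lambda>(r,s). H r s) x) \<le> norm (D x)"
      unfolding x D_def H_def \<psi>_def \<phi>'_def
      by (auto simp: indicator_def norm_mult)
  qed
  have fub: "(\<integral>s. (\<integral>r. H r s \<partial>lborel) \<partial>lborel) = (\<integral>r. (\<integral>s. H r s \<partial>lborel) \<partial>lborel)"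
    using lborel_pair.Fubini_integral[of H] H_int by simp
  have inner_r: "(\<integral>r. H r s \<partial>lborel) = indicator {a..b} s *\<^sub>R (\<phi>' s * (F s - F a))" for s
  proof (cases "s \<in> {a..b}")
    case True
    have hh: "(\<lambda>r. H r s) = (\<lambda>r. \<phi>' s * (indicator {a..s} r *\<^sub>R G r))"
      using True by (auto simp: H_def \<psi>_def indicator_def fun_eq_iff)
    have "(\<integral>r. H r s \<partial>lborel) = (\<integral>r. \<phi>' s * (indicator {a..s} r *\<^sub>R G r) \<partial>lborel)"
      by (simp only: hh)
    also have "\<dots> = \<phi>' s * (LINT r:{a..s}|lborel. G r)"
      unfolding set_lebesgue_integral_def by (rule integral_mult_right_zero)
    finally have "(\<integral>r. H r s \<partial>lborel) = \<phi>' s * (LINT r:{a..s}|lborel. G r)" .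
    then show ?thesis using True eq[of a s] by simp
  next
    case False
    then have "(\<lambda>r. H r s) = (\<lambda>r. 0)"
      by (auto simp: H_def \<psi>_def indicator_def fun_eq_iff)
    then show ?thesis using False by simp
  qed
  have inner_s: "(\<integral>s. H r s \<partial>lborel) = \<psi> r * (\<phi> b - \<phi> r)" for r
  proof (cases "r \<le> b")
    case True
    have hh: "(\<lambda>s. H r s) = (\<lambda>s. (indicator {r..b} s *\<^sub>R \<phi>' s) * \<psi> r)"
      by (auto simp: H_def indicator_def fun_eq_iff)
    have ftc: "(\<integral>s. indicator {r..b} s *\<^sub>R \<phi>' s \<partial>lborel) = \<phi> b - \<phi> r"
      by (rule integral_FTC_Icc[OF True dphi continuous_on_subset[OF contphi']]) auto
    have "(\<integral>s. H r s \<partial>lborel) = (\<integral>s. (indicator {r..b} s *\<^sub>R \<phi>' s) * \<psi> r \<partial>lborel)"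
      by (simp only: hh)
    also have "\<dots> = (\<integral>s. indicator {r..b} s *\<^sub>R \<phi>' s \<partial>lborel) * \<psi> r"
      by (rule integral_mult_left_zero)
    finally show ?thesis using ftc by (simp add: mult.commute)
  next
    case False
    then have "(\<lambda>s. H r s) = (\<lambda>s. 0)" "\<psi> r = 0"
      by (auto simp: H_def \<psi>_def indicator_def fun_eq_iff)
    then show ?thesis by simp
  qed
  have i1: "set_integrable lborel {a..b} (\<lambda>s. \<phi>' s * F s)"
    by (intro borel_integrable_atLeastAtMost' continuous_intros continuous_on_subset[OF contphi'] continuous_on_subset[OF contF]) auto
  have i2: "set_integrable lborel {a..b} \<phi>'"
    by (intro borel_integrable_atLeastAtMost' continuous_on_subset[OF contphi']) auto
  have i3: "set_integrable lborel {a..b} (\<lambda>s. \<phi> s * G s)"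
    unfolding set_integrable_def
  proof (rule Bochner_Integration.integrable_bound[OF integrable_norm[OF psi_int]])
    have "(\<lambda>s. indicator {a..b} s *\<^sub>R (\<phi> s * G s)) = (\<lambda>s. \<phi> s * \<psi> s)"
      by (auto simp: \<psi>_def indicator_def fun_eq_iff)
    moreover have "\<phi> \<in> borel_measurable lborel"
      using borel_measurable_continuous_onI[OF contphi] by simp
    ultimately show "(\<lambda>s. indicator {a..b} s *\<^sub>R (\<phi> s * G s)) \<in> borel_measurable lborel"
      using psi_meas by simp
    show "AE x in lborel. norm (indicator {a..b} x *\<^sub>R (\<phi> x * G x)) \<le> norm (norm (\<psi> x))"
      by (auto simp: \<psi>_def indicator_def norm_mult)
  qed
  have "(\<integral>s. (\<integral>r. H r s \<partial>lborel) \<partial>lborel) = (LINT s:{a..b}|lborel. \<phi>' s * F s - \<phi>' s * F a)"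
    unfolding inner_r set_lebesgue_integral_def by (simp add: algebra_simps)
  also have "\<dots> = (LINT s:{a..b}|lborel. \<phi>' s * F s) - (LINT s:{a..b}|lborel. \<phi>' s) * F a"
    using i1 i2 by (simp add: set_integral_diff set_integral_mult_left)
  also have "(LINT s:{a..b}|lborel. \<phi>' s) = \<phi> b - \<phi> a"
    unfolding set_lebesgue_integral_def
    by (rule integral_FTC_Icc[OF ab dphi continuous_on_subset[OF contphi']]) auto
  finally have L: "(\<integral>s. (\<integral>r. H r s \<partial>lborel) \<partial>lborel) = (LINT s:{a..b}|lborel. \<phi>' s * F s) - (\<phi> b - \<phi> a) * F a" .
  have "(\<integral>r. (\<integral>s. H r s \<partial>lborel) \<partial>lborel) = (\<integral>r. \<phi> b * \<psi> r - \<phi> r * \<psi> r \<partial>lborel)"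
    unfolding inner_s by (simp add: algebra_simps)
  also have "\<dots> = \<phi> b * (\<integral>r. \<psi> r \<partial>lborel) - (LINT r:{a..b}|lborel. \<phi> r * G r)"
  proof -
    have "(\<lambda>r. \<phi> r * \<psi> r) = (\<lambda>r. indicator {a..b} r *\<^sub>R (\<phi> r * G r))"
      by (auto simp: \<psi>_def indicator_def fun_eq_iff)
    moreover have "integrable lborel (\<lambda>r. indicator {a..b} r *\<^sub>R (\<phi> r * G r))"
      using i3 unfolding set_integrable_def .
    ultimately show ?thesis using psi_int
      by (simp add: set_lebesgue_integral_def)
  qed
  also have "(\<integral>r. \<psi> r \<partial>lborel) = F b - F a"
    using eq[OF ab] unfolding \<psi>_def set_lebesgue_integral_def by simp
  finally have R: "(\<integral>r. (\<integral>s. H r s \<partial>lborel) \<partial>lborel) = \<phi> b * (F b - F a) - (LINT r:{a..b}|lborel. \<phi> r * G r)" .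
  have "(LINT s:{a..b}|lborel. \<phi> s * (G s + \<i> * complex_of_real c * F s))
      = (LINT s:{a..b}|lborel. \<phi> s * G s + \<phi>' s * F s)"
    unfolding \<phi>'_def by (simp add: algebra_simps)
  also have "\<dots> = (LINT s:{a..b}|lborel. \<phi> s * G s) + (LINT s:{a..b}|lborel. \<phi>' s * F s)"
    using i3 i1 by (rule set_integral_add)
  also have "\<dots> = \<phi> b * F b - \<phi> a * F a"
    using L R fub by (simp add: algebra_simps)
  finally show ?thesis unfolding \<phi>_def by simp
qed

lemma H1_periodic: "H1_loop f \<Longrightarrow> f (t + 2*pi) = f t"
  unfolding H1_loop_def by blast

lemma cH1_periodic:
  assumes "H1_loop (\<lambda>t. Re (\<zeta> t))" "H1_loop (\<lambda>t. Im (\<zeta> t))"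
  shows "\<zeta> (t + 2*pi) = \<zeta> t"
  using H1_periodic[OF assms(1)] H1_periodic[OF assms(2)] by (simp add: complex_eq_iff)

lemma cH1_cont:
  assumes "H1_loop (\<lambda>t. Re (\<zeta> t))" "H1_loop (\<lambda>t. Im (\<zeta> t))"
  shows "continuous_on UNIV \<zeta>"
  by (rule cont_from_integral[OF cwd_props(1)[OF assms] cwd_props(2)[OF assms]])

lemma H1_cont:
  assumes "H1_loop f"
  shows "continuous_on UNIV f"
  using wd_spec(1)[OF assms] unfolding weak_deriv_def
  by (intro cont_from_integral[of "wd f"]) auto

lemma set_integrable_exp_mult:
  fixes v :: "real \<Rightarrow> complex"
  assumes "set_integrable lborel A v"
  shows "set_integrable lborel A (\<lambda>s. exp (\<i> * complex_of_real (c * s)) * v s)"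
  unfolding set_integrable_def
proof (rule Bochner_Integration.integrable_bound[OF integrable_norm[OF assms[unfolded set_integrable_def]]])
  have m1: "(\<lambda>s. indicator A s *\<^sub>R v s) \<in> borel_measurable lborel"
    using assms unfolding set_integrable_def by (rule borel_measurable_integrable)
  have "continuous_on UNIV (\<lambda>s. exp (\<i> * complex_of_real (c * s)))" by (intro continuous_intros)
  then have m2: "(\<lambda>s. exp (\<i> * complex_of_real (c * s))) \<in> borel_measurable lborel"
    using borel_measurable_continuous_onI by simp
  have eq: "(\<lambda>s. indicator A s *\<^sub>R (exp (\<i> * complex_of_real (c * s)) * v s))
     = (\<lambda>s. exp (\<i> * complex_of_real (c * s)) * (indicator A s *\<^sub>R v s))"
    by (auto simp: indicator_def fun_eq_iff)
  show "(\<lambda>s. indicator A s *\<^sub>R (exp (\<i> * complex_of_real (c * s)) * v s)) \<in> borel_measurable lborel"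
    unfolding eq using m2 m1 by (rule borel_measurable_times)
  show "AE x in lborel. norm (indicator A x *\<^sub>R (exp (\<i> * complex_of_real (c * x)) * v x)) \<le> norm (norm (indicator A x *\<^sub>R v x))"
    by (auto simp: indicator_def norm_mult)
qed

lemma sq_norm_add_le: "(norm (x + y :: 'a::real_normed_vector))\<^sup>2 \<le> 2 * (norm x)\<^sup>2 + 2 * (norm y)\<^sup>2"
proof -
  have "norm (x + y) \<le> norm x + norm y" by (rule norm_triangle_ineq)
  then have "(norm (x + y))\<^sup>2 \<le> (norm x + norm y)\<^sup>2"
    by (simp add: power_mono)
  also have "\<dots> \<le> 2 * (norm x)\<^sup>2 + 2 * (norm y)\<^sup>2"
  proof -
    have "0 \<le> (norm x - norm y)\<^sup>2" by simp
    then show ?thesis by (simp add: power2_eq_square algebra_simps)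
  qed
  finally show ?thesis .
qed

lemma cwd_sq: "(cmod (cwd \<zeta> t))\<^sup>2 = (wd (\<lambda>s. Re (\<zeta> s)) t)\<^sup>2 + (wd (\<lambda>s. Im (\<zeta> s)) t)\<^sup>2"
  unfolding cwd_def by (simp add: cmod_power2)

lemma v_props:
  fixes \<zeta> :: "real \<Rightarrow> complex" and c :: real
  assumes h1: "H1_loop (\<lambda>t. Re (\<zeta> t))" "H1_loop (\<lambda>t. Im (\<zeta> t))"
  defines "v \<equiv> (\<lambda>t. cwd \<zeta> t + \<i> * complex_of_real c * \<zeta> t)"
  shows "set_integrable lborel {a..b} v"
    and "set_integrable lborel {0..2*pi} (\<lambda>t. (cmod (v t))\<^sup>2)"
    and "a \<le> b \<Longrightarrow> exp (\<i> * complex_of_real (c * b)) * \<zeta> b - exp (\<i> * complex_of_real (c * a)) * \<zeta> a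
          = (LINT s:{a..b}|lborel. exp (\<i> * complex_of_real (c * s)) * v s)"
proof -
  have contz: "continuous_on UNIV \<zeta>" by (rule cH1_cont[OF h1])
  have vi: "set_integrable lborel {a..b} v" for a b
    unfolding v_def
    by (intro set_integral_add(1) cwd_props(1)[OF h1] borel_integrable_atLeastAtMost'
        continuous_intros continuous_on_subset[OF contz]) auto
  then show "set_integrable lborel {a..b} v" .
  show "a \<le> b \<Longrightarrow> exp (\<i> * complex_of_real (c * b)) * \<zeta> b - exp (\<i> * complex_of_real (c * a)) * \<zeta> a
          = (LINT s:{a..b}|lborel. exp (\<i> * complex_of_real (c * s)) * v s)"
    unfolding v_def by (rule by_parts_exp[OF cwd_props(1)[OF h1] cwd_props(2)[OF h1]])
  let ?g1 = "wd (\<lambda>s. Re (\<zeta> s))" and ?g2 = "wd (\<lambda>s. Im (\<zeta> s))"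
  let ?A = "{0..2*pi}"
  have s1: "set_integrable lborel ?A (\<lambda>t. (?g1 t)\<^sup>2)" "set_integrable lborel ?A (\<lambda>t. (?g2 t)\<^sup>2)"
    using wd_spec(2) h1 by blast+
  have s3: "set_integrable lborel ?A (\<lambda>t. (cmod (\<zeta> t))\<^sup>2)"
    by (intro borel_integrable_atLeastAtMost' continuous_intros continuous_on_subset[OF contz]) auto
  have bnd: "set_integrable lborel ?A (\<lambda>t. 2 * ((?g1 t)\<^sup>2 + (?g2 t)\<^sup>2) + 2 * c\<^sup>2 * (cmod (\<zeta> t))\<^sup>2)"
    using s1 s3 by (intro set_integral_add(1) set_integrable_mult_right) auto
  show "set_integrable lborel ?A (\<lambda>t. (cmod (v t))\<^sup>2)"
    unfolding set_integrable_def
  proof (rule Bochner_Integration.integrable_bound[OF bnd[unfolded set_integrable_def]])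
    have "(\<lambda>t. indicator ?A t *\<^sub>R v t) \<in> borel_measurable lborel"
      using vi[of 0 "2*pi"] unfolding set_integrable_def by (rule borel_measurable_integrable)
    then have "(\<lambda>t. (norm (indicator ?A t *\<^sub>R v t))\<^sup>2) \<in> borel_measurable lborel" by measurable
    moreover have "(\<lambda>t. (norm (indicator ?A t *\<^sub>R v t))\<^sup>2) = (\<lambda>t. indicator ?A t *\<^sub>R (cmod (v t))\<^sup>2)"
      by (auto simp: indicator_def fun_eq_iff)
    ultimately show "(\<lambda>t. indicator ?A t *\<^sub>R (cmod (v t))\<^sup>2) \<in> borel_measurable lborel" by simp
    show "AE t in lborel. norm (indicator ?A t *\<^sub>R (cmod (v t))\<^sup>2) \<le>
       norm (indicator ?A t *\<^sub>R (2 * ((?g1 t)\<^sup>2 + (?g2 t)\<^sup>2) + 2 * c\<^sup>2 * (cmod (\<zeta> t))\<^sup>2))"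
    proof (rule AE_I2)
      fix t
      have "(cmod (v t))\<^sup>2 \<le> 2 * (cmod (cwd \<zeta> t))\<^sup>2 + 2 * (cmod (\<i> * complex_of_real c * \<zeta> t))\<^sup>2"
        unfolding v_def by (rule sq_norm_add_le)
      also have "\<dots> = 2 * ((?g1 t)\<^sup>2 + (?g2 t)\<^sup>2) + 2 * c\<^sup>2 * (cmod (\<zeta> t))\<^sup>2"
        by (simp add: cwd_sq norm_mult power_mult_distrib)
      finally have "(cmod (v t))\<^sup>2 \<le> 2 * ((?g1 t)\<^sup>2 + (?g2 t)\<^sup>2) + 2 * c\<^sup>2 * (cmod (\<zeta> t))\<^sup>2" .
      then show "norm (indicator ?A t *\<^sub>R (cmod (v t))\<^sup>2) \<le>
       norm (indicator ?A t *\<^sub>R (2 * ((?g1 t)\<^sup>2 + (?g2 t)\<^sup>2) + 2 * c\<^sup>2 * (cmod (\<zeta> t))\<^sup>2))"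
        by (auto simp: indicator_def)
    qed
  qed
qed

lemma nn_to_real:
  fixes h :: "real \<Rightarrow> real"
  assumes int: "set_integrable lborel A h" and nn: "\<And>t. 0 \<le> h t"
    and le: "(\<integral>\<^sup>+ t\<in>A. ennreal (h t / 2) \<partial>lborel) \<le> ennreal B0" and B0: "0 \<le> B0"
  shows "(LINT t:A|lborel. h t) \<le> 2 * B0"
proof -
  let ?f = "\<lambda>t. indicator A t *\<^sub>R (h t / 2)"
  have fi: "integrable lborel ?f" using int unfolding set_integrable_def by simp
  have "(\<integral>\<^sup>+ t. ennreal (?f t) \<partial>lborel) = ennreal (integral\<^sup>L lborel ?f)"
    by (rule nn_integral_eq_integral[OF fi]) (auto simp: nn)
  moreover have "(\<integral>\<^sup>+ t. ennreal (?f t) \<partial>lborel) = (\<integral>\<^sup>+ t\<in>A. ennreal (h t / 2) \<partial>lborel)"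
    by (rule nn_integral_cong) (auto simp: indicator_def)
  moreover have "integral\<^sup>L lborel ?f = (LINT t:A|lborel. h t) / 2"
    unfolding set_lebesgue_integral_def by simp
  ultimately have "ennreal ((LINT t:A|lborel. h t) / 2) \<le> ennreal B0" using le by simp
  then have "(LINT t:A|lborel. h t) / 2 \<le> B0" using B0 by (simp add: ennreal_le_iff)
  then show ?thesis by simp
qed

lemma L1_bound:
  fixes h :: "real \<Rightarrow> real"
  assumes sq: "set_integrable lborel {0..2*pi} (\<lambda>t. (h t)\<^sup>2)" and hi: "set_integrable lborel {a..b} h"
    and ab: "0 \<le> a" "a \<le> b" "b \<le> 2*pi"
  shows "(LINT t:{a..b}|lborel. \<bar>h t\<bar>) \<le> pi + (LINT t:{0..2*pi}|lborel. (h t)\<^sup>2) / 2"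
proof -
  have sq': "set_integrable lborel {a..b} (\<lambda>t. (h t)\<^sup>2)"
    by (rule set_integrable_subset[OF sq]) (use ab in auto)
  have c1: "set_integrable lborel {a..b} (\<lambda>t. (1::real))"
    by (intro borel_integrable_atLeastAtMost' continuous_intros)
  have "(LINT t:{a..b}|lborel. \<bar>h t\<bar>) \<le> (LINT t:{a..b}|lborel. (1 + (h t)\<^sup>2) / 2)"
  proof (rule set_integral_mono)
    show "set_integrable lborel {a..b} (\<lambda>t. \<bar>h t\<bar>)" using hi by (rule set_integrable_abs)
    show "set_integrable lborel {a..b} (\<lambda>t. (1 + (h t)\<^sup>2) / 2)"
      using c1 sq' by (intro set_integrable_divide set_integral_add(1))
    fix t show "\<bar>h t\<bar> \<le> (1 + (h t)\<^sup>2) / 2"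
    proof -
      have "0 \<le> (\<bar>h t\<bar> - 1)\<^sup>2" by simp
      then show ?thesis by (simp add: power2_eq_square algebra_simps)
    qed
  qed
  also have "\<dots> = ((LINT t:{a..b}|lborel. 1) + (LINT t:{a..b}|lborel. (h t)\<^sup>2)) / 2"
    using c1 sq' by (simp add: set_integral_add(2))
  also have "(LINT t:{a..b}|lborel. (1::real)) = b - a"
    using ab by (simp add: set_lebesgue_integral_def)
  also have "(LINT t:{a..b}|lborel. (h t)\<^sup>2) \<le> (LINT t:{0..2*pi}|lborel. (h t)\<^sup>2)"
    unfolding set_lebesgue_integral_def
    using sq sq' unfolding set_integrable_def
    by (intro integral_mono) (use ab in \<open>auto simp: indicator_def\<close>)
  then have "((b - a) + (LINT t:{a..b}|lborel. (h t)\<^sup>2)) / 2 \<le> pi + (LINT t:{0..2*pi}|lborel. (h t)\<^sup>2) / 2"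
    using ab by simp
  finally show ?thesis by simp
qed

lemma action_v:
  assumes i: "i < N"
  shows "(\<integral>\<^sup>+ t\<in>{0..2*pi}. ennreal ((cmod (cwd (\<zeta> i) t + \<i> * complex_of_real \<omega> * \<zeta> i t))\<^sup>2 / 2) \<partial>lborel)
      \<le> action N \<omega> \<zeta> z (2*pi)"
    and "(\<integral>\<^sup>+ t\<in>{0..2*pi}. ennreal ((wd (z i) t)\<^sup>2 / 2) \<partial>lborel) \<le> action N \<omega> \<zeta> z (2*pi)"
proof -
  let ?x = "\<lambda>j t. (cmod (cwd (\<zeta> j) t + \<i> * complex_of_real \<omega> * \<zeta> j t))\<^sup>2"
  let ?y = "\<lambda>j t. (wd (z j) t)\<^sup>2"
  have sum_ge: "?x i t + ?y i t \<le> (\<Sum>j<N. ?x j t + ?y j t)" for t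
    by (rule member_le_sum) (use i in auto)
  have pt: "ennreal (a / 2) \<le> ennreal ((1/2) * (\<Sum>j<N. ?x j t + ?y j t)) + potU N (\<lambda>j. \<zeta> j t) (\<lambda>j. z j t)"
    if "a \<le> ?x i t + ?y i t" for a t
  proof -
    have "ennreal (a / 2) \<le> ennreal ((1/2) * (\<Sum>j<N. ?x j t + ?y j t))"
      using that sum_ge[of t] by (intro ennreal_leI) simp
    also have "\<dots> \<le> ennreal ((1/2) * (\<Sum>j<N. ?x j t + ?y j t)) + potU N (\<lambda>j. \<zeta> j t) (\<lambda>j. z j t)"
      by simp
    finally show ?thesis .
  qed
  show "(\<integral>\<^sup>+ t\<in>{0..2*pi}. ennreal (?x i t / 2) \<partial>lborel) \<le> action N \<omega> \<zeta> z (2*pi)"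
    unfolding action_def
  proof (rule nn_integral_mono)
    fix t
    show "ennreal (?x i t / 2) * indicator {0..2*pi} t \<le> (ennreal ((1/2) * (\<Sum>j<N. ?x j t + ?y j t)) + potU N (\<lambda>j. \<zeta> j t) (\<lambda>j. z j t)) * indicator {0..2*pi} t"
      by (rule mult_right_mono[OF pt]) auto
  qed
  show "(\<integral>\<^sup>+ t\<in>{0..2*pi}. ennreal (?y i t / 2) \<partial>lborel) \<le> action N \<omega> \<zeta> z (2*pi)"
    unfolding action_def
  proof (rule nn_integral_mono)
    fix t
    show "ennreal (?y i t / 2) * indicator {0..2*pi} t \<le> (ennreal ((1/2) * (\<Sum>j<N. ?x j t + ?y j t)) + potU N (\<lambda>j. \<zeta> j t) (\<lambda>j. z j t)) * indicator {0..2*pi} t"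
      by (rule mult_right_mono[OF pt]) auto
  qed
qed

lemma exp_periodic:
  "exp (\<i> * complex_of_real (real k * (t + 2*pi))) = exp (\<i> * complex_of_real (real k * t))"
proof -
  have "exp (\<i> * complex_of_real (real k * (t + 2*pi))) = cis (real k * t + 2 * pi * real k)"
    by (simp add: cis_conv_exp algebra_simps)
  also have "\<dots> = cis (real k * t) * cis (2 * pi * real k)" by (rule cis_mult[symmetric])
  also have "\<dots> = cis (real k * t)" using cis_multiple_2pi[of "real k"] by simp
  finally show ?thesis by (simp add: cis_conv_exp)
qed

lemma osc_complex:
  fixes \<zeta> :: "real \<Rightarrow> complex" and k :: nat
  assumes h1: "H1_loop (\<lambda>t. Re (\<zeta> t))" "H1_loop (\<lambda>t. Im (\<zeta> t))"
    and L2: "(LINT t:{0..2*pi}|lborel. (cmod (cwd \<zeta> t + \<i> * complex_of_real (real k) * \<zeta> t))\<^sup>2) \<le> 2 * B0"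
  shows "cmod (exp (\<i> * complex_of_real (real k * t)) * \<zeta> t - exp (\<i> * complex_of_real (real k * s)) * \<zeta> s) \<le> pi + B0"
proof -
  define v where "v = (\<lambda>t. cwd \<zeta> t + \<i> * complex_of_real (real k) * \<zeta> t)"
  define w where "w = (\<lambda>t. exp (\<i> * complex_of_real (real k * t)) * \<zeta> t)"
  have vi: "set_integrable lborel {a..b} v" for a b unfolding v_def by (rule v_props(1)[OF h1])
  have v2: "set_integrable lborel {0..2*pi} (\<lambda>t. (cmod (v t))\<^sup>2)" unfolding v_def by (rule v_props(2)[OF h1])
  have v3: "w b - w a = (LINT s:{a..b}|lborel. exp (\<i> * complex_of_real (real k * s)) * v s)" if "a \<le> b" for a b
    unfolding v_def w_def by (rule v_props(3)[OF h1 that])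
  have L2': "(LINT t:{0..2*pi}|lborel. (cmod (v t))\<^sup>2) \<le> 2 * B0" unfolding v_def by (rule L2)
  have wper: "w (t + 2*pi) = w t" for t
    unfolding w_def by (simp only: exp_periodic cH1_periodic[OF h1])
  have base: "cmod (w b - w a) \<le> pi + B0" if ab: "0 \<le> a" "a \<le> b" "b \<le> 2*pi" for a b
  proof -
    have "cmod (w b - w a) \<le> (LINT s:{a..b}|lborel. cmod (exp (\<i> * complex_of_real (real k * s)) * v s))"
      unfolding v3[OF ab(2)] by (rule set_integral_norm_bound[OF set_integrable_exp_mult[OF vi]])
    also have "\<dots> = (LINT s:{a..b}|lborel. \<bar>cmod (v s)\<bar>)"
      by (simp add: norm_mult)
    also have "\<dots> \<le> pi + (LINT t:{0..2*pi}|lborel. (cmod (v t))\<^sup>2) / 2"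
      by (rule L1_bound[OF v2 set_integrable_norm[OF vi] ab])
    also have "\<dots> \<le> pi + B0" using L2' by simp
    finally show ?thesis .
  qed
  have all: "cmod (w t - w s) \<le> pi + B0" for t s
  proof -
    obtain t' where t': "t' \<in> {0..2*pi}" "w t = w t'"
      using periodic_reduce[of w "2*pi" t] wper by auto
    obtain s' where s': "s' \<in> {0..2*pi}" "w s = w s'"
      using periodic_reduce[of w "2*pi" s] wper by auto
    show ?thesis
    proof (cases "s' \<le> t'")
      case True
      have "cmod (w t' - w s') \<le> pi + B0" by (rule base) (use True t' s' in auto)
      then show ?thesis by (simp only: t'(2) s'(2))
    next
      case False
      have "cmod (w s' - w t') \<le> pi + B0" by (rule base) (use False t' s' in auto)
      then show ?thesis by (simp only: t'(2) s'(2) norm_minus_commute)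
    qed
  qed
  then show ?thesis unfolding w_def .
qed

lemma osc_real:
  assumes h1: "H1_loop f"
    and L2: "(LINT t:{0..2*pi}|lborel. (wd f t)\<^sup>2) \<le> 2 * B0"
  shows "\<bar>f t - f s\<bar> \<le> pi + B0"
proof -
  have wdf: "weak_deriv f (wd f)" and sq: "set_integrable lborel {0..2*pi} (\<lambda>t. (wd f t)\<^sup>2)"
    using wd_spec[OF h1] by auto
  have base: "\<bar>f b - f a\<bar> \<le> pi + B0" if ab: "0 \<le> a" "a \<le> b" "b \<le> 2*pi" for a b
  proof -
    have ii: "set_integrable lborel {a..b} (wd f)" using wdf unfolding weak_deriv_def by auto
    have "f b - f a = (LINT s:{a..b}|lborel. wd f s)" using wdf ab unfolding weak_deriv_def by auto
    then have "\<bar>f b - f a\<bar> \<le> (LINT s:{a..b}|lborel. norm (wd f s))"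
      using set_integral_norm_bound[OF ii] by simp
    also have "\<dots> = (LINT s:{a..b}|lborel. \<bar>wd f s\<bar>)" by simp
    also have "\<dots> \<le> pi + (LINT t:{0..2*pi}|lborel. (wd f t)\<^sup>2) / 2"
      by (rule L1_bound[OF sq ii ab])
    also have "\<dots> \<le> pi + B0" using L2 by simp
    finally show ?thesis .
  qed
  have per: "f (t + 2*pi) = f t" for t using H1_periodic[OF h1] .
  obtain t' where t': "t' \<in> {0..2*pi}" "f t = f t'"
    using periodic_reduce[of f "2*pi" t] per by auto
  obtain s' where s': "s' \<in> {0..2*pi}" "f s = f s'"
    using periodic_reduce[of f "2*pi" s] per by auto
  show ?thesis
  proof (cases "s' \<le> t'")
    case True then show ?thesis using base[of s' t'] t' s' by auto
  next
    case False then show ?thesis using base[of t' s'] t' s' by auto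
  qed
qed

lemma mean0_bound:
  assumes h1: "H1_loop f" and m: "mean f = 0"
    and osc: "\<And>t s. \<bar>f t - f s\<bar> \<le> D"
  shows "\<bar>f t\<bar> \<le> D"
proof (rule ccontr)
  assume "\<not> \<bar>f t\<bar> \<le> D"
  then consider "f t > D" | "f t < - D" by linarith
  note c = this
  have cont: "continuous_on UNIV f" by (rule H1_cont[OF h1])
  have fi: "set_integrable lborel {0..2*pi} f"
    by (intro borel_integrable_atLeastAtMost' continuous_on_subset[OF cont]) auto
  have ci: "set_integrable lborel {0..2*pi} (\<lambda>s. c)" for c :: real
    by (intro borel_integrable_atLeastAtMost' continuous_intros)
  have I0: "(LINT s:{0..2*pi}|lborel. f s) = 0" using m unfolding mean_def by simp
  have Ic: "(LINT s:{0..2*pi}|lborel. (c::real)) = 2 * pi * c" for c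
    by (simp add: set_lebesgue_integral_def)
  show False
  proof (cases rule: c)
    case 1
    have "(LINT s:{0..2*pi}|lborel. f t - D) \<le> (LINT s:{0..2*pi}|lborel. f s)"
    proof (rule set_integral_mono[OF ci fi])
      fix x show "f t - D \<le> f x" using osc[of t x] by (simp add: abs_le_iff)
    qed
    then have "2 * pi * (f t - D) \<le> 0" using I0 Ic by simp
    moreover have "2 * pi * (f t - D) > 0" using 1 by simp
    ultimately show False by simp
  next
    case 2
    have "(LINT s:{0..2*pi}|lborel. f s) \<le> (LINT s:{0..2*pi}|lborel. f t + D)"
    proof (rule set_integral_mono[OF fi ci])
      fix x show "f x \<le> f t + D" using osc[of x t] by (simp add: abs_le_iff)
    qed
    then have "0 \<le> 2 * pi * (f t + D)" using I0 Ic by simp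
    moreover have "2 * pi * (f t + D) < 0" using 2 by (simp add: mult_pos_neg)
    ultimately show False by simp
  qed
qed

lemma h1_sq_le:
  assumes sq: "set_integrable lborel {0..2*pi} (\<lambda>t. (wd f t)\<^sup>2)"
    and bnd: "\<And>t. (f t)\<^sup>2 \<le> R2" and R2: "0 \<le> R2"
  shows "h1_sq f \<le> 2*pi*R2 + (LINT t:{0..2*pi}|lborel. (wd f t)\<^sup>2)"
proof -
  have ci: "set_integrable lborel {0..2*pi} (\<lambda>t. R2)"
    by (intro borel_integrable_atLeastAtMost' continuous_intros)
  have nn: "0 \<le> (LINT t:{0..2*pi}|lborel. (wd f t)\<^sup>2)"
    unfolding set_lebesgue_integral_def by (rule Bochner_Integration.integral_nonneg) (auto simp: indicator_def)
  have Ic: "(LINT s:{0..2*pi}|lborel. R2) = 2 * pi * R2"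
    by (simp add: set_lebesgue_integral_def)
  show ?thesis
  proof (cases "set_integrable lborel {0..2*pi} (\<lambda>t. (f t)\<^sup>2 + (wd f t)\<^sup>2)")
    case True
    have "h1_sq f \<le> (LINT t:{0..2*pi}|lborel. R2 + (wd f t)\<^sup>2)"
      unfolding h1_sq_def
    proof (rule set_integral_mono[OF True])
      show "set_integrable lborel {0..2*pi} (\<lambda>t. R2 + (wd f t)\<^sup>2)"
        using ci sq by (rule set_integral_add(1))
      fix t show "(f t)\<^sup>2 + (wd f t)\<^sup>2 \<le> R2 + (wd f t)\<^sup>2" using bnd[of t] by simp
    qed
    also have "\<dots> = 2*pi*R2 + (LINT t:{0..2*pi}|lborel. (wd f t)\<^sup>2)"
      using set_integral_add(2)[OF ci sq] Ic by simp
    finally show ?thesis .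
  next
    case False
    then have "h1_sq f = 0"
      unfolding h1_sq_def set_lebesgue_integral_def set_integrable_def
      by (rule not_integrable_integral_eq)
    then show ?thesis using nn R2 by simp
  qed
qed

lemma unit_diff_le:
  fixes x y :: complex
  assumes y: "y \<noteq> 0"
  shows "cmod (x / of_real (cmod x) - y / of_real (cmod y)) \<le> 2 * cmod (x - y) / cmod y"
proof (cases "x = 0")
  case True
  then show ?thesis using y by (simp add: norm_divide)
next
  case False
  have nx: "cmod x > 0" and ny: "cmod y > 0" using False y by auto
  have eq: "x / of_real (cmod x) - y / of_real (cmod y)
      = (x - y) / of_real (cmod y) + (x / of_real (cmod x)) * of_real ((cmod y - cmod x) / cmod y)"
    using nx ny by (simp add: field_simps)
  have "cmod (x / of_real (cmod x) - y / of_real (cmod y))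
      \<le> cmod ((x - y) / of_real (cmod y)) + cmod ((x / of_real (cmod x)) * of_real ((cmod y - cmod x) / cmod y))"
    unfolding eq by (rule norm_triangle_ineq)
  also have "\<dots> = cmod (x - y) / cmod y + \<bar>cmod y - cmod x\<bar> / cmod y"
    using nx ny by (simp add: norm_divide norm_mult flip: of_real_diff)
  also have "\<bar>cmod y - cmod x\<bar> \<le> cmod (x - y)"
    by (metis norm_minus_commute norm_triangle_ineq3)
  then have "cmod (x - y) / cmod y + \<bar>cmod y - cmod x\<bar> / cmod y \<le> 2 * cmod (x - y) / cmod y"
    using ny by (simp add: divide_right_mono add_divide_distrib[symmetric])
  finally show ?thesis .
qed

lemma config_bounds:
  fixes N k :: nat and \<zeta> :: "nat \<Rightarrow> real \<Rightarrow> complex" and z :: "nat \<Rightarrow> real \<Rightarrow> real"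
  assumes N: "0 < N"
    and loops: "in_Lambda N \<zeta> z"
    and chor: "simple_choreographic N \<zeta> z"
    and mean0: "mean (z 0) = 0"
    and act: "action N (real k) \<zeta> z (2*pi) \<le> ennreal B0" and B0: "0 \<le> B0"
  shows "\<forall>i<N. h1_sq (z i) \<le> 2*pi*(pi+B0)\<^sup>2 + 2*B0"
    and "\<forall>t s. cmod (exp (\<i> * complex_of_real (real k * t)) * \<zeta> 0 t - exp (\<i> * complex_of_real (real k * s)) * \<zeta> 0 s) \<le> pi + B0"
    and "Lambda_norm N \<zeta> z \<le> sqrt (real N * (4*pi*(1 + (real k)\<^sup>2)*(cmod (\<zeta> 0 0) + (pi + B0))\<^sup>2 + 6*B0 + 2*pi*(pi+B0)\<^sup>2))"
proof -
  define D where "D = pi + B0"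
  define m where "m = cmod (\<zeta> 0 0)"
  have D0: "0 \<le> D" unfolding D_def using B0 pi_gt_zero by linarith
  have h1: "H1_loop (\<lambda>t. Re (\<zeta> i t))" "H1_loop (\<lambda>t. Im (\<zeta> i t))" "H1_loop (z i)" if "i < N" for i
    using loops that unfolding in_Lambda_def by auto
  have sh: "\<zeta> i t = \<zeta> 0 (t + 2*pi*real i / real N)" "z i t = z 0 (t + 2*pi*real i / real N)" if "i < N" for i t
    using chor that unfolding simple_choreographic_def by blast+
  have L2v: "(LINT t:{0..2*pi}|lborel. (cmod (cwd (\<zeta> i) t + \<i> * complex_of_real (real k) * \<zeta> i t))\<^sup>2) \<le> 2 * B0"
    if i: "i < N" for i
  proof (rule nn_to_real[OF v_props(2)[OF h1(1,2)[OF i]] _ _ B0])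
    show "(\<integral>\<^sup>+ t\<in>{0..2*pi}. ennreal ((cmod (cwd (\<zeta> i) t + \<i> * complex_of_real (real k) * \<zeta> i t))\<^sup>2 / 2) \<partial>lborel) \<le> ennreal B0"
      using action_v(1)[OF i, of \<zeta> "real k" z] act by (rule order_trans)
  qed simp
  have L2z: "(LINT t:{0..2*pi}|lborel. (wd (z i) t)\<^sup>2) \<le> 2 * B0" if i: "i < N" for i
  proof (rule nn_to_real[OF wd_spec(2)[OF h1(3)[OF i]] _ _ B0])
    show "(\<integral>\<^sup>+ t\<in>{0..2*pi}. ennreal ((wd (z i) t)\<^sup>2 / 2) \<partial>lborel) \<le> ennreal B0"
      using action_v(2)[OF i, of z "real k" \<zeta>] act by (rule order_trans)
  qed simp
  have zosc: "\<bar>z 0 t - z 0 s\<bar> \<le> D" for t s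
    unfolding D_def by (rule osc_real[OF h1(3)[OF N] L2z[OF N]])
  have z0b: "\<bar>z 0 t\<bar> \<le> D" for t
    by (rule mean0_bound[OF h1(3)[OF N] mean0 zosc])
  have zb: "(z i t)\<^sup>2 \<le> D\<^sup>2" if i: "i < N" for i t
  proof -
    have "\<bar>z i t\<bar> \<le> D" using z0b sh(2)[OF i] by metis
    then have "\<bar>z i t\<bar> \<le> \<bar>D\<bar>" using D0 by simp
    then show ?thesis using abs_le_square_iff by blast
  qed
  have hz: "h1_sq (z i) \<le> 2*pi*D\<^sup>2 + 2*B0" if i: "i < N" for i
  proof -
    have "h1_sq (z i) \<le> 2*pi*D\<^sup>2 + (LINT t:{0..2*pi}|lborel. (wd (z i) t)\<^sup>2)"
      by (rule h1_sq_le[OF wd_spec(2)[OF h1(3)[OF i]] zb[OF i]]) simp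
    then show ?thesis using L2z[OF i] by simp
  qed
  then show "\<forall>i<N. h1_sq (z i) \<le> 2*pi*(pi+B0)\<^sup>2 + 2*B0" unfolding D_def by auto
  define w where "w = (\<lambda>t. exp (\<i> * complex_of_real (real k * t)) * \<zeta> 0 t)"
  have wosc: "cmod (w t - w s) \<le> D" for t s
    unfolding w_def D_def by (rule osc_complex[OF h1(1,2)[OF N] L2v[OF N]])
  then show "\<forall>t s. cmod (exp (\<i> * complex_of_real (real k * t)) * \<zeta> 0 t - exp (\<i> * complex_of_real (real k * s)) * \<zeta> 0 s) \<le> pi + B0"
    unfolding w_def D_def by blast
  have w0: "w 0 = \<zeta> 0 0" unfolding w_def by simp
  have cw: "cmod (\<zeta> 0 x) = cmod (w x)" for x unfolding w_def by (simp add: norm_mult)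
  have zub: "cmod (\<zeta> i t) \<le> m + D" if i: "i < N" for i t
  proof -
    have "cmod (w (t + 2*pi*real i / real N)) \<le> cmod (w 0) + cmod (w (t + 2*pi*real i / real N) - w 0)"
      by (metis add.commute diff_add_cancel norm_triangle_ineq)
    then have "cmod (w (t + 2*pi*real i / real N)) \<le> m + D"
      using wosc[of "t + 2*pi*real i / real N" 0] unfolding m_def w0 by simp
    then show ?thesis using sh(1)[OF i, of t] cw by simp
  qed
  have mD0: "0 \<le> m + D" using D0 unfolding m_def by simp
  have hzeta: "h1_sq (\<lambda>t. Re (\<zeta> i t)) + h1_sq (\<lambda>t. Im (\<zeta> i t)) \<le> 4*pi*(1 + (real k)\<^sup>2)*(m+D)\<^sup>2 + 4*B0"
    if i: "i < N" for i
  proof -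
    let ?g1 = "wd (\<lambda>t. Re (\<zeta> i t))" and ?g2 = "wd (\<lambda>t. Im (\<zeta> i t))"
    let ?v = "\<lambda>t. cwd (\<zeta> i) t + \<i> * complex_of_real (real k) * \<zeta> i t"
    have s1: "set_integrable lborel {0..2*pi} (\<lambda>t. (?g1 t)\<^sup>2)" by (rule wd_spec(2)[OF h1(1)[OF i]])
    have s2: "set_integrable lborel {0..2*pi} (\<lambda>t. (?g2 t)\<^sup>2)" by (rule wd_spec(2)[OF h1(2)[OF i]])
    have sv: "set_integrable lborel {0..2*pi} (\<lambda>t. (cmod (?v t))\<^sup>2)" by (rule v_props(2)[OF h1(1,2)[OF i]])
    have reb: "(Re (\<zeta> i t))\<^sup>2 \<le> (m+D)\<^sup>2" for t
    proof -
      have "\<bar>Re (\<zeta> i t)\<bar> \<le> \<bar>m+D\<bar>" using abs_Re_le_cmod[of "\<zeta> i t"] zub[OF i, of t] mD0 by simp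
      then show ?thesis using abs_le_square_iff by blast
    qed
    have imb: "(Im (\<zeta> i t))\<^sup>2 \<le> (m+D)\<^sup>2" for t
    proof -
      have "\<bar>Im (\<zeta> i t)\<bar> \<le> \<bar>m+D\<bar>" using abs_Im_le_cmod[of "\<zeta> i t"] zub[OF i, of t] mD0 by simp
      then show ?thesis using abs_le_square_iff by blast
    qed
    have a1: "h1_sq (\<lambda>t. Re (\<zeta> i t)) \<le> 2*pi*(m+D)\<^sup>2 + (LINT t:{0..2*pi}|lborel. (?g1 t)\<^sup>2)"
      by (rule h1_sq_le[OF s1 reb]) simp
    have a2: "h1_sq (\<lambda>t. Im (\<zeta> i t)) \<le> 2*pi*(m+D)\<^sup>2 + (LINT t:{0..2*pi}|lborel. (?g2 t)\<^sup>2)"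
      by (rule h1_sq_le[OF s2 imb]) simp
    have ci: "set_integrable lborel {0..2*pi} (\<lambda>t. 2 * (real k)\<^sup>2 * (m+D)\<^sup>2)"
      by (intro borel_integrable_atLeastAtMost' continuous_intros)
    have "(LINT t:{0..2*pi}|lborel. (?g1 t)\<^sup>2) + (LINT t:{0..2*pi}|lborel. (?g2 t)\<^sup>2)
        = (LINT t:{0..2*pi}|lborel. (?g1 t)\<^sup>2 + (?g2 t)\<^sup>2)"
      using set_integral_add(2)[OF s1 s2] by simp
    also have "\<dots> \<le> (LINT t:{0..2*pi}|lborel. 2 * (cmod (?v t))\<^sup>2 + 2 * (real k)\<^sup>2 * (m+D)\<^sup>2)"
    proof (rule set_integral_mono)
      show "set_integrable lborel {0..2*pi} (\<lambda>t. (?g1 t)\<^sup>2 + (?g2 t)\<^sup>2)" using s1 s2 by (rule set_integral_add(1))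
      show "set_integrable lborel {0..2*pi} (\<lambda>t. 2 * (cmod (?v t))\<^sup>2 + 2 * (real k)\<^sup>2 * (m+D)\<^sup>2)"
        using set_integrable_mult_right[OF sv, of 2] ci by (rule set_integral_add(1))
      fix t
      have "(cmod (cwd (\<zeta> i) t))\<^sup>2 = (cmod (?v t + - (\<i> * complex_of_real (real k) * \<zeta> i t)))\<^sup>2" by simp
      also have "\<dots> \<le> 2 * (cmod (?v t))\<^sup>2 + 2 * (cmod (- (\<i> * complex_of_real (real k) * \<zeta> i t)))\<^sup>2"
        by (rule sq_norm_add_le)
      also have "(cmod (- (\<i> * complex_of_real (real k) * \<zeta> i t)))\<^sup>2 = (real k)\<^sup>2 * (cmod (\<zeta> i t))\<^sup>2"
        by (simp add: norm_mult power_mult_distrib)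
      also have "(cmod (\<zeta> i t))\<^sup>2 \<le> (m+D)\<^sup>2"
        using zub[OF i, of t] by (simp add: power_mono)
      finally show "(?g1 t)\<^sup>2 + (?g2 t)\<^sup>2 \<le> 2 * (cmod (?v t))\<^sup>2 + 2 * (real k)\<^sup>2 * (m+D)\<^sup>2"
        unfolding cwd_sq by (simp add: mult_left_mono)
    qed
    also have "\<dots> = 2 * (LINT t:{0..2*pi}|lborel. (cmod (?v t))\<^sup>2) + 2*pi*(2 * (real k)\<^sup>2 * (m+D)\<^sup>2)"
      using set_integral_add(2)[OF set_integrable_mult_right[OF sv, of 2] ci]
      by (simp add: set_lebesgue_integral_def)
    also have "\<dots> \<le> 4 * B0 + 4*pi*(real k)\<^sup>2*(m+D)\<^sup>2"
      using L2v[OF i] by simp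
    finally have "(LINT t:{0..2*pi}|lborel. (?g1 t)\<^sup>2) + (LINT t:{0..2*pi}|lborel. (?g2 t)\<^sup>2) \<le> 4 * B0 + 4*pi*(real k)\<^sup>2*(m+D)\<^sup>2" .
    then show ?thesis using a1 a2 by (simp add: algebra_simps)
  qed
  have "(\<Sum>i<N. h1_sq (\<lambda>t. Re (\<zeta> i t)) + h1_sq (\<lambda>t. Im (\<zeta> i t)) + h1_sq (z i))
      \<le> real (card {..<N}) * (4*pi*(1 + (real k)\<^sup>2)*(m+D)\<^sup>2 + 6*B0 + 2*pi*D\<^sup>2)"
  proof (rule sum_bounded_above)
    fix i assume "i \<in> {..<N}"
    then have i: "i < N" by simp
    show "h1_sq (\<lambda>t. Re (\<zeta> i t)) + h1_sq (\<lambda>t. Im (\<zeta> i t)) + h1_sq (z i) \<le> 4*pi*(1 + (real k)\<^sup>2)*(m+D)\<^sup>2 + 6*B0 + 2*pi*D\<^sup>2"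
      using hzeta[OF i] hz[OF i] by simp
  qed
  then show "Lambda_norm N \<zeta> z \<le> sqrt (real N * (4*pi*(1 + (real k)\<^sup>2)*(cmod (\<zeta> 0 0) + (pi + B0))\<^sup>2 + 6*B0 + 2*pi*(pi+B0)\<^sup>2))"
    unfolding Lambda_norm_def m_def D_def by (simp add: real_sqrt_le_mono)
qed

theorem lemma5p2:
  fixes N k :: nat
    and \<zeta> :: "nat \<Rightarrow> nat \<Rightarrow> real \<Rightarrow> complex"
    and z :: "nat \<Rightarrow> nat \<Rightarrow> real \<Rightarrow> real"
  assumes N2: "N \<ge> 2"
    and k: "1 \<le> k" "k \<le> N - 1"
    and loops: "\<And>n. in_Lambda N (\<zeta> n) (z n)"
    and chor: "\<And>n. simple_choreographic N (\<zeta> n) (z n)"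
    and mean0: "\<And>n. mean (z n 0) = 0"
    and unbounded: "filterlim (\<lambda>n. Lambda_norm N (\<zeta> n) (z n)) at_top sequentially"
    and bounded: "\<exists>B::real. \<forall>n. action N (real k) (\<zeta> n) (z n) (2*pi) \<le> ennreal B"
  shows "(\<exists>C. \<forall>n. \<forall>i<N. h1_norm (z n i) \<le> C)
    \<and> (\<forall>i<N. \<forall>M::real. eventually (\<lambda>n. \<forall>t. M \<le> cmod (\<zeta> n i t)) sequentially)
    \<and> (\<exists>r::nat \<Rightarrow> nat. strict_mono r \<and> (\<exists>u::nat \<Rightarrow> complex. \<forall>i<N. cmod (u i) = 1 \<and>
         uniform_limit UNIV (\<lambda>n t. \<zeta> (r n) i t / of_real (cmod (\<zeta> (r n) i t)))
            (\<lambda>t. exp (- \<i> * of_real (real k * t)) * u i) sequentially))"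
proof -
  obtain B where B: "\<And>n. action N (real k) (\<zeta> n) (z n) (2*pi) \<le> ennreal B" using bounded by blast
  define B0 where "B0 = max B 0"
  have B0: "0 \<le> B0" unfolding B0_def by simp
  have act: "action N (real k) (\<zeta> n) (z n) (2*pi) \<le> ennreal B0" for n
    using B[of n] ennreal_leI[of B B0] unfolding B0_def by (meson max.cobounded1 order_trans)
  have N0: "0 < N" using N2 by simp
  note cb = config_bounds[OF N0 loops chor mean0 act B0]
  define D where "D = pi + B0"
  have D0: "0 \<le> D" unfolding D_def using B0 pi_gt_zero by linarith
  define m where "m n = cmod (\<zeta> n 0 0)" for n
  define P where "P x = sqrt (real N * (4*pi*(1 + (real k)\<^sup>2)*(x + D)\<^sup>2 + 6*B0 + 2*pi*D\<^sup>2))" for x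
  have LN: "Lambda_norm N (\<zeta> n) (z n) \<le> P (m n)" for n
    using cb(3)[of n] unfolding P_def m_def D_def .
  define W where "W n t = exp (\<i> * complex_of_real (real k * t)) * \<zeta> n 0 t" for n t
  have wosc: "cmod (W n t - W n s) \<le> D" for n t s
    using cb(2)[of n] unfolding W_def D_def by blast
  have W0: "W n 0 = \<zeta> n 0 0" for n unfolding W_def by simp
  have cw: "cmod (\<zeta> n 0 x) = cmod (W n x)" for n x unfolding W_def by (simp add: norm_mult)
  have sh: "\<zeta> n i t = \<zeta> n 0 (t + 2*pi*real i / real N)" if "i < N" for n i t
    using chor[of n] that unfolding simple_choreographic_def by blast
  have partA: "\<exists>C. \<forall>n. \<forall>i<N. h1_norm (z n i) \<le> C"
  proof (intro exI allI impI)
    fix n i assume "i < N"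
    then have "h1_sq (z n i) \<le> 2*pi*(pi+B0)\<^sup>2 + 2*B0" using cb(1)[of n] by blast
    then show "h1_norm (z n i) \<le> sqrt (2*pi*(pi+B0)\<^sup>2 + 2*B0)"
      unfolding h1_norm_def by (rule real_sqrt_le_mono)
  qed
  have mlarge: "eventually (\<lambda>n. K \<le> m n) sequentially" for K
  proof -
    define K' where "K' = max K 0"
    have "eventually (\<lambda>n. P K' + 1 \<le> Lambda_norm N (\<zeta> n) (z n)) sequentially"
      using unbounded unfolding filterlim_at_top by blast
    then show ?thesis
    proof (rule eventually_mono)
      fix n assume h: "P K' + 1 \<le> Lambda_norm N (\<zeta> n) (z n)"
      show "K \<le> m n"
      proof (rule ccontr)
        assume "\<not> K \<le> m n"
        then have a: "m n + D \<le> K' + D" by (simp add: K'_def)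
        have b: "0 \<le> m n + D" using D0 unfolding m_def by simp
        from a b have "(m n + D)\<^sup>2 \<le> (K' + D)\<^sup>2" by (rule power_mono)
        then have "4*pi*(1 + (real k)\<^sup>2)*(m n + D)\<^sup>2 \<le> 4*pi*(1 + (real k)\<^sup>2)*(K' + D)\<^sup>2"
          by (intro mult_left_mono) auto
        then have "P (m n) \<le> P K'" unfolding P_def
          by (intro real_sqrt_le_mono mult_left_mono) auto
        then show False using h LN[of n] by linarith
      qed
    qed
  qed
  have lower: "m n - D \<le> cmod (\<zeta> n i t)" if i: "i < N" for n i t
  proof -
    let ?x = "t + 2*pi*real i / real N"
    have "cmod (W n 0) - cmod (W n 0 - W n ?x) \<le> cmod (W n ?x)"
      using norm_triangle_ineq2[of "W n 0" "W n ?x"] by simp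
    moreover have "cmod (W n 0 - W n ?x) \<le> D" by (rule wosc)
    ultimately have "m n - D \<le> cmod (W n ?x)" unfolding m_def W0 by simp
    then show ?thesis using sh[OF i, of n t] cw by simp
  qed
  have partB: "\<forall>i<N. \<forall>M::real. eventually (\<lambda>n. \<forall>t. M \<le> cmod (\<zeta> n i t)) sequentially"
  proof (intro allI impI)
    fix i M assume i: "i < N"
    show "eventually (\<lambda>n. \<forall>t. M \<le> cmod (\<zeta> n i t)) sequentially"
      using mlarge[of "M + D"]
    proof (rule eventually_mono)
      fix n assume "M + D \<le> m n"
      then show "\<forall>t. M \<le> cmod (\<zeta> n i t)" using lower[OF i, of n] by (smt (verit))
    qed
  qed
  define a where "a n = \<zeta> n 0 0 / complex_of_real (m n)" for n
  have a_ball: "a n \<in> cball 0 1" for n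
    unfolding a_def m_def by (cases "\<zeta> n 0 0 = 0") (auto simp: norm_divide)
  obtain u0 r where u0: "u0 \<in> cball 0 1" and r: "strict_mono r" and lim: "(a \<circ> r) \<longlonglongrightarrow> u0"
    using compact_imp_seq_compact[OF compact_cball[of "0::complex" 1]] a_ball
    unfolding seq_compact_def by meson
  have mlr: "eventually (\<lambda>n. K \<le> m (r n)) sequentially" for K
    using eventually_subseq[OF r mlarge[of K]] .
  have nu0: "cmod u0 = 1"
  proof -
    have l1: "(\<lambda>n. cmod (a (r n))) \<longlonglongrightarrow> cmod u0"
      using tendsto_norm[OF lim] by (simp add: o_def)
    have "eventually (\<lambda>n. cmod (a (r n)) = 1) sequentially"
      using mlr[of 1]
    proof (rule eventually_mono)
      fix n assume h1: "1 \<le> m (r n)"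
      have nz: "\<zeta> (r n) 0 0 \<noteq> 0"
      proof
        assume "\<zeta> (r n) 0 0 = 0"
        then have "m (r n) = 0" unfolding m_def by simp
        then show False using h1 by simp
      qed
      then show "cmod (a (r n)) = 1" unfolding a_def m_def by (simp add: norm_divide)
    qed
    then have "(\<lambda>n. cmod (a (r n))) \<longlonglongrightarrow> 1" by (rule tendsto_eventually)
    with l1 show ?thesis using LIMSEQ_unique by blast
  qed
  define u where "u i = exp (\<i> * complex_of_real (- (real k * (2*pi*real i / real N)))) * u0" for i
  have partC: "\<forall>i<N. cmod (u i) = 1 \<and>
         uniform_limit UNIV (\<lambda>n t. \<zeta> (r n) i t / of_real (cmod (\<zeta> (r n) i t)))
            (\<lambda>t. exp (- \<i> * of_real (real k * t)) * u i) sequentially"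
  proof (intro allI impI conjI)
    fix i assume i: "i < N"
    show "cmod (u i) = 1" unfolding u_def using nu0 by (simp add: norm_mult)
    let ?c = "2*pi*real i / real N"
    show "uniform_limit UNIV (\<lambda>n t. \<zeta> (r n) i t / of_real (cmod (\<zeta> (r n) i t)))
            (\<lambda>t. exp (- \<i> * of_real (real k * t)) * u i) sequentially"
    proof (rule uniform_limitI)
      fix e :: real assume e: "0 < e"
      have e1: "eventually (\<lambda>n. dist (a (r n)) u0 < e/2) sequentially"
      proof -
        have T: "\<forall>e>0. eventually (\<lambda>n. dist ((a \<circ> r) n) u0 < e) sequentially"
          using lim unfolding tendsto_iff .
        have "eventually (\<lambda>n. dist ((a \<circ> r) n) u0 < e/2) sequentially"
          by (rule T[rule_format]) (use e in simp)
        then show ?thesis by (simp add: o_def)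
      qed
      have e2: "eventually (\<lambda>n. 4*D/e + 1 \<le> m (r n)) sequentially" by (rule mlr)
      show "eventually (\<lambda>n. \<forall>t\<in>UNIV. dist (\<zeta> (r n) i t / of_real (cmod (\<zeta> (r n) i t)))
                  (exp (- \<i> * of_real (real k * t)) * u i) < e) sequentially"
        using eventually_conj[OF e1 e2]
      proof (rule eventually_mono)
        fix n assume h: "dist (a (r n)) u0 < e/2 \<and> 4*D/e + 1 \<le> m (r n)"
        define q where "q = r n"
        have hq: "cmod (a q - u0) < e/2" "4*D/e + 1 \<le> m q" using h unfolding q_def by (auto simp: dist_norm)
        have mq: "0 < m q" using hq(2) D0 e by (smt (verit) divide_nonneg_pos)
        have W0nz: "W q 0 \<noteq> 0" using mq unfolding m_def W0 by auto
        have aq: "a q = W q 0 / of_real (cmod (W q 0))" unfolding a_def m_def W0 by simp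
        have small: "2 * D / m q < e/2"
        proof -
          have "4*D/e < m q" using hq(2) by simp
          then have "4*D < m q * e" using e by (simp add: divide_less_eq)
          then show ?thesis using mq by (simp add: divide_less_eq mult.commute)
        qed
        show "\<forall>t\<in>UNIV. dist (\<zeta> (r n) i t / of_real (cmod (\<zeta> (r n) i t)))
                  (exp (- \<i> * of_real (real k * t)) * u i) < e"
        proof
          fix t :: real
          define x where "x = t + ?c"
          define E where "E = exp (\<i> * complex_of_real (- (real k * x)))"
          have nE: "cmod E = 1" unfolding E_def by simp
          have zq: "\<zeta> q i t = E * W q x"
          proof -
            have "E * W q x = (exp (\<i> * complex_of_real (- (real k * x))) * exp (\<i> * complex_of_real (real k * x))) * \<zeta> q 0 x"
              unfolding E_def W_def by (simp add: mult.assoc)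
            also have "exp (\<i> * complex_of_real (- (real k * x))) * exp (\<i> * complex_of_real (real k * x)) = 1"
              by (simp add: exp_add[symmetric])
            finally show ?thesis using sh[OF i, of q t] unfolding x_def by simp
          qed
          have f_eq: "\<zeta> q i t / of_real (cmod (\<zeta> q i t)) = E * (W q x / of_real (cmod (W q x)))"
            unfolding zq using nE by (simp add: norm_mult)
          have l_eq: "exp (- \<i> * of_real (real k * t)) * u i = E * u0"
          proof -
            have "exp (- \<i> * of_real (real k * t)) * u i
                = (exp (\<i> * complex_of_real (- (real k * t))) * exp (\<i> * complex_of_real (- (real k * ?c)))) * u0"
              unfolding u_def by (simp add: mult.assoc)
            also have "exp (\<i> * complex_of_real (- (real k * t))) * exp (\<i> * complex_of_real (- (real k * ?c))) = E"
              unfolding E_def x_def by (simp add: exp_add[symmetric] algebra_simps)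
            finally show ?thesis .
          qed
          have "dist (\<zeta> q i t / of_real (cmod (\<zeta> q i t))) (exp (- \<i> * of_real (real k * t)) * u i)
              = cmod (E * (W q x / of_real (cmod (W q x)) - u0))"
            unfolding f_eq l_eq dist_norm by (simp only: right_diff_distrib)
          also have "\<dots> = cmod (W q x / of_real (cmod (W q x)) - u0)"
            using nE by (simp only: norm_mult mult_1)
          also have "\<dots> \<le> cmod (W q x / of_real (cmod (W q x)) - a q) + cmod (a q - u0)"
            using norm_triangle_ineq[of "W q x / of_real (cmod (W q x)) - a q" "a q - u0"] by simp
          also have "cmod (W q x / of_real (cmod (W q x)) - a q) \<le> 2 * cmod (W q x - W q 0) / cmod (W q 0)"
            unfolding aq by (rule unit_diff_le[OF W0nz])
          also have "2 * cmod (W q x - W q 0) / cmod (W q 0) \<le> 2 * D / m q"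
            unfolding m_def W0[symmetric] using wosc[of q x 0] W0nz
            by (simp add: divide_right_mono)
          finally have "dist (\<zeta> q i t / of_real (cmod (\<zeta> q i t))) (exp (- \<i> * of_real (real k * t)) * u i) < e"
            using small hq(1) by linarith
          then show "dist (\<zeta> (r n) i t / of_real (cmod (\<zeta> (r n) i t))) (exp (- \<i> * of_real (real k * t)) * u i) < e"
            unfolding q_def .
        qed
      qed
    qed
  qed
  show ?thesis using partA partB r partC by blast
qed

end
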